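(* Let $\mu$ be a positive, finite, continuous (i.e. atomless) Borel measure on $\mathbb{R}^n$ and $\nu$ a positive, finite, continuous Borel measure on $\mathbb{R}^m$, and assume that each of $L^2(\mu)$ and $L^2(\nu)$ admits a Fourier frame. Define the measure $\rho=\mu\times\delta_0+\delta_0\times\nu$ on $\mathbb{R}^{n+m}=\mathbb{R}^n\times\mathbb{R}^m$, i.e. $$\int_{\mathbb{R}^n\times\mathbb{R}^m} f(x,y)\,d\rho(x,y)=\int_{\mathbb{R}^n} f(x,0)\,d\mu(x)+\int_{\mathbb{R}^m} f(0,y)\,d\nu(y)$$ for every continuous compactly supported $f$. Then $L^2(\rho)$ admits a Fourier frame.
   Context: For $\lambda\in\mathbb{R}^d$ let $e_\lambda(x)=e^{2\pi i\langle\lambda,x\rangle}$. For a positive finite Borel measure $\mu$ on $\mathbb{R}^d$ and a countable set $\Lambda\subset\mathbb{R}^d$, the system $E(\Lambda)=\{e_\lambda\}_{\lambda\in\Lambda}$ is a Fourier frame for $L^2(\mu)$ if there are constants $0<A,B<\infty$ with $A\|f\|^2_{L^2(\mu)}\le\sum_{\lambda\in\Lambda}|\langle f,e_\lambda\rangle_{L^2(\mu)}|^2\le B\|f\|^2_{L^2(\mu)}$ for all $f\in L^2(\mu)$. "$L^2(\mu)$ admits a Fourier frame" means such a $\Lambda$ exists. $\delta_0$ denotes the Dirac measure at the origin. *)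

theory Defs
  imports "HOL-Analysis.Analysis"
begin

definition expo :: "'a::euclidean_space \<Rightarrow> 'a \<Rightarrow> complex" where
  "expo l x = cis (2 * pi * (l \<bullet> x))"

definition L2 :: "'a::euclidean_space measure \<Rightarrow> ('a \<Rightarrow> complex) set" where
  "L2 M = {f. f \<in> borel_measurable M \<and> integrable M (\<lambda>x. (cmod (f x))\<^sup>2)}"

definition L2_norm_sq :: "'a::euclidean_space measure \<Rightarrow> ('a \<Rightarrow> complex) \<Rightarrow> real" where
  "L2_norm_sq M f = (\<integral>x. (cmod (f x))\<^sup>2 \<partial>M)"

definition L2_inner :: "'a::euclidean_space measure \<Rightarrow> ('a \<Rightarrow> complex) \<Rightarrow> ('a \<Rightarrow> complex) \<Rightarrow> complex" where
  "L2_inner M f g = (\<integral>x. f x * cnj (g x) \<partial>M)"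

definition fourier_frame :: "'a::euclidean_space measure \<Rightarrow> 'a set \<Rightarrow> bool" where
  "fourier_frame M \<Lambda> \<longleftrightarrow> countable \<Lambda> \<and>
     (\<exists>A B. 0 < A \<and> 0 < B \<and>
        (\<forall>f \<in> L2 M.
           (\<lambda>l. (cmod (L2_inner M f (expo l)))\<^sup>2) summable_on \<Lambda> \<and>
           A * L2_norm_sq M f \<le> (\<Sum>\<^sub>\<infinity>l\<in>\<Lambda>. (cmod (L2_inner M f (expo l)))\<^sup>2) \<and>
           (\<Sum>\<^sub>\<infinity>l\<in>\<Lambda>. (cmod (L2_inner M f (expo l)))\<^sup>2) \<le> B * L2_norm_sq M f))"

definition admits_fourier_frame :: "'a::euclidean_space measure \<Rightarrow> bool" where
  "admits_fourier_frame M \<longleftrightarrow> (\<exists>\<Lambda>. fourier_frame M \<Lambda>)"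

definition cont_finite_borel :: "'a::euclidean_space measure \<Rightarrow> bool" where
  "cont_finite_borel M \<longleftrightarrow> sets M = sets borel \<and> finite_measure M \<and>
     (\<forall>x. emeasure M {x} = 0)"

definition rho_measure :: "'a::euclidean_space measure \<Rightarrow> 'b::euclidean_space measure \<Rightarrow> ('a \<times> 'b) measure" where
  "rho_measure \<mu> \<nu> = measure_of UNIV (sets borel)
     (\<lambda>S. emeasure (distr \<mu> borel (\<lambda>x. (x, 0))) S + emeasure (distr \<nu> borel (\<lambda>y. (0, y))) S)"

end

theory Submission
  imports Defs
begin


lemma sum_meas_nn:
  assumes s1: "sets M1 = sets M" and s2: "sets M2 = sets M"
    and e: "\<And>A. A \<in> sets M \<Longrightarrow> emeasure M A = emeasure M1 A + emeasure M2 A"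
    and f: "f \<in> borel_measurable M"
  shows "(\<integral>\<^sup>+x. f x \<partial>M) = (\<integral>\<^sup>+x. f x \<partial>M1) + (\<integral>\<^sup>+x. f x \<partial>M2)"
  using f
proof (induction rule: borel_measurable_induct)
  have sp1: "space M1 = space M" and sp2: "space M2 = space M"
    using s1 s2 by (metis sets_eq_imp_space_eq)+
  have m1: "\<And>g::_\<Rightarrow>ennreal. g \<in> borel_measurable M \<Longrightarrow> g \<in> borel_measurable M1"
    using measurable_cong_sets[OF s1 refl] by auto
  have m2: "\<And>g::_\<Rightarrow>ennreal. g \<in> borel_measurable M \<Longrightarrow> g \<in> borel_measurable M2"
    using measurable_cong_sets[OF s2 refl] by auto
  {
  case (cong f g)
  have "(\<integral>\<^sup>+x. f x \<partial>M) = (\<integral>\<^sup>+x. g x \<partial>M)" by (intro nn_integral_cong) (use cong in auto)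
  moreover have "(\<integral>\<^sup>+x. f x \<partial>M1) = (\<integral>\<^sup>+x. g x \<partial>M1)" by (intro nn_integral_cong) (use cong sp1 in auto)
  moreover have "(\<integral>\<^sup>+x. f x \<partial>M2) = (\<integral>\<^sup>+x. g x \<partial>M2)" by (intro nn_integral_cong) (use cong sp2 in auto)
  ultimately show ?case using cong by simp
  next
  case (set A)
  then show ?case using s1 s2 e by simp
  next
  case (mult u c)
  then show ?case by (simp add: nn_integral_cmult m1 m2 distrib_left)
  next
  case (add u v)
  then show ?case by (simp add: nn_integral_add m1 m2 ac_simps)
  next
  case (seq U)
  have inc: "\<And>N. incseq (\<lambda>i. \<integral>\<^sup>+x. U i x \<partial>N)"
    using \<open>incseq U\<close> by (auto simp: incseq_def le_fun_def intro!: nn_integral_mono)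
  have "(\<integral>\<^sup>+x. (SUP i. U i) x \<partial>M) = (SUP i. \<integral>\<^sup>+x. U i x \<partial>M)"
    unfolding SUP_apply by (rule nn_integral_monotone_convergence_SUP[OF \<open>incseq U\<close>]) (simp add: seq)
  moreover have "(\<integral>\<^sup>+x. (SUP i. U i) x \<partial>M1) = (SUP i. \<integral>\<^sup>+x. U i x \<partial>M1)"
    unfolding SUP_apply by (rule nn_integral_monotone_convergence_SUP[OF \<open>incseq U\<close>]) (simp add: seq m1)
  moreover have "(\<integral>\<^sup>+x. (SUP i. U i) x \<partial>M2) = (SUP i. \<integral>\<^sup>+x. U i x \<partial>M2)"
    unfolding SUP_apply by (rule nn_integral_monotone_convergence_SUP[OF \<open>incseq U\<close>]) (simp add: seq m2)
  moreover have "(SUP i. \<integral>\<^sup>+x. U i x \<partial>M) = (SUP i. (\<integral>\<^sup>+x. U i x \<partial>M1) + (\<integral>\<^sup>+x. U i x \<partial>M2))"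
    by (simp add: seq)
  moreover have "\<dots> = (SUP i. \<integral>\<^sup>+x. U i x \<partial>M1) + (SUP i. \<integral>\<^sup>+x. U i x \<partial>M2)"
    by (rule ennreal_SUP_add[OF inc inc])
  ultimately show ?case by metis
  }
qed

lemma sum_meas_integrable:
  fixes f :: "_ \<Rightarrow> 'b::{banach,second_countable_topology}"
  assumes s1: "sets M1 = sets M" and s2: "sets M2 = sets M"
    and e: "\<And>A. A \<in> sets M \<Longrightarrow> emeasure M A = emeasure M1 A + emeasure M2 A"
  shows "integrable M f \<longleftrightarrow> integrable M1 f \<and> integrable M2 f"
proof -
  have m1: "borel_measurable M1 = borel_measurable M" using measurable_cong_sets[OF s1 refl] .
  have m2: "borel_measurable M2 = borel_measurable M" using measurable_cong_sets[OF s2 refl] .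
  show ?thesis
  proof (cases "f \<in> borel_measurable M")
    case True
    then have "(\<lambda>x. ennreal (norm (f x))) \<in> borel_measurable M" by measurable
    from sum_meas_nn[OF s1 s2 e this] show ?thesis
      unfolding integrable_iff_bounded using True m1 m2 by auto
  next
    case False
    then show ?thesis unfolding integrable_iff_bounded using m1 m2 by auto
  qed
qed

lemma sum_meas_integral:
  fixes f :: "_ \<Rightarrow> 'b::{banach,second_countable_topology}"
  assumes s1: "sets M1 = sets M" and s2: "sets M2 = sets M"
    and e: "\<And>A. A \<in> sets M \<Longrightarrow> emeasure M A = emeasure M1 A + emeasure M2 A"
    and f: "integrable M f"
  shows "integral\<^sup>L M f = integral\<^sup>L M1 f + integral\<^sup>L M2 f"
  using f
proof induct
  have sp1: "space M1 = space M" and sp2: "space M2 = space M"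
    using s1 s2 by (metis sets_eq_imp_space_eq)+
  note I = sum_meas_integrable[OF s1 s2 e]
  {
  case (base A c)
  have A1: "A \<in> sets M1" "A \<in> sets M2" using base s1 s2 by auto
  have f1: "emeasure M1 A < \<infinity>" "emeasure M2 A < \<infinity>" using base e[of A] by auto
  have "measure M A = measure M1 A + measure M2 A"
    unfolding measure_def using e[OF base(1)] f1 by (simp add: enn2real_plus)
  then show ?case using base A1 f1 by (simp add: scaleR_add_left)
  next
  case (add f g)
  have "integrable M1 f" "integrable M2 f" "integrable M1 g" "integrable M2 g" using add I by auto
  then show ?case using add by (simp add: integral_add)
  next
  case (lim f s)
  have i1: "integrable M1 f" "integrable M2 f" "\<And>i. integrable M1 (s i)" "\<And>i. integrable M2 (s i)"
    using lim(1,5) I by blast+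
  have L: "(\<lambda>i. integral\<^sup>L N (s i)) \<longlonglongrightarrow> integral\<^sup>L N f" if "space N = space M" "integrable N f"
     "\<And>i. integrable N (s i)" for N
  proof (rule integral_dominated_convergence)
    show "integrable N (\<lambda>x. 2 * norm (f x))" using that by auto
    show "AE x in N. (\<lambda>i. s i x) \<longlonglongrightarrow> f x" using lim(3) that by auto
    show "\<And>i. AE x in N. norm (s i x) \<le> 2 * norm (f x)" using lim(4) that by auto
  qed (use that borel_measurable_integrable in auto)
  have "(\<lambda>i. integral\<^sup>L M (s i)) \<longlonglongrightarrow> integral\<^sup>L M1 f + integral\<^sup>L M2 f"
    using tendsto_add[OF L[OF sp1 i1(1,3)] L[OF sp2 i1(2,4)]] lim(2) by simp
  with L[OF refl lim(5) lim(1)] show ?case by (rule LIMSEQ_unique)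
  }
qed

lemma rho_props:
  fixes \<mu> :: "'a::euclidean_space measure" and \<nu> :: "'b::euclidean_space measure"
  shows "sets (rho_measure \<mu> \<nu>) = sets borel"
   and "A \<in> sets borel \<Longrightarrow> emeasure (rho_measure \<mu> \<nu>) A =
      emeasure (distr \<mu> borel (\<lambda>x. (x, 0))) A + emeasure (distr \<nu> borel (\<lambda>y. (0, y))) A"
proof -
  let ?D1 = "distr \<mu> borel (\<lambda>x. (x, 0::'b))" and ?D2 = "distr \<nu> borel (\<lambda>y. (0::'a, y))"
  have sa: "sigma_algebra UNIV (sets (borel::('a\<times>'b) measure))"
    using sets.sigma_algebra_axioms[of "borel::('a\<times>'b) measure"] by simp
  show "sets (rho_measure \<mu> \<nu>) = sets borel"
    unfolding rho_measure_def by (subst sets_measure_of) (auto simp: sigma_algebra.sigma_sets_eq[OF sa])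
  have pos: "positive (sets borel) (\<lambda>S. emeasure ?D1 S + emeasure ?D2 S)"
    by (simp add: positive_def)
  have ca: "countably_additive (sets borel) (\<lambda>S. emeasure ?D1 S + emeasure ?D2 S)"
    unfolding countably_additive_def
  proof safe
    fix A :: "nat \<Rightarrow> ('a\<times>'b) set"
    assume "range A \<subseteq> sets borel" "disjoint_family A" "\<Union> (range A) \<in> sets borel"
    then have "(\<Sum>i. emeasure ?D1 (A i)) = emeasure ?D1 (\<Union> (range A))"
      "(\<Sum>i. emeasure ?D2 (A i)) = emeasure ?D2 (\<Union> (range A))"
      by (auto intro!: suminf_emeasure)
    then show "(\<Sum>i. emeasure ?D1 (A i) + emeasure ?D2 (A i)) = emeasure ?D1 (\<Union> (range A)) + emeasure ?D2 (\<Union> (range A))"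
      by (simp add: suminf_add[symmetric])
  qed
  show "A \<in> sets borel \<Longrightarrow> emeasure (rho_measure \<mu> \<nu>) A = emeasure ?D1 A + emeasure ?D2 A"
    unfolding rho_measure_def by (rule emeasure_measure_of_sigma[OF sa pos ca])
qed

lemma expo_Pair1: "expo (l1, l2) (x, 0) = expo l1 x" and expo_Pair2: "expo (l1, l2) (0, y) = expo l2 y"
  by (simp_all add: expo_def)

lemma norm_expo[simp]: "cmod (expo l x) = 1"
  by (simp add: expo_def)

lemma le_1_plus_sq: "(t::real) \<le> 1 + t\<^sup>2"
proof -
  have "0 \<le> (t - 1)\<^sup>2" by simp
  then have "2 * t \<le> 1 + t\<^sup>2" by (simp add: power2_eq_square algebra_simps)
  moreover have "0 \<le> t\<^sup>2" by simp
  ultimately show ?thesis by linarith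
qed

lemma decouple:
  fixes \<mu> :: "'a::euclidean_space measure" and \<nu> :: "'b::euclidean_space measure"
  assumes s\<mu>: "sets \<mu> = sets borel" and s\<nu>: "sets \<nu> = sets borel"
    and fm: "finite_measure \<mu>" and fn: "finite_measure \<nu>"
    and f: "f \<in> L2 (rho_measure \<mu> \<nu>)"
  shows "(\<lambda>x. f (x,0)) \<in> L2 \<mu>" "(\<lambda>y. f (0,y)) \<in> L2 \<nu>"
    "L2_norm_sq (rho_measure \<mu> \<nu>) f = L2_norm_sq \<mu> (\<lambda>x. f (x,0)) + L2_norm_sq \<nu> (\<lambda>y. f (0,y))"
    "L2_inner (rho_measure \<mu> \<nu>) f (expo (l1,l2)) =
       L2_inner \<mu> (\<lambda>x. f (x,0)) (expo l1) + L2_inner \<nu> (\<lambda>y. f (0,y)) (expo l2)"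
proof -
  let ?\<rho> = "rho_measure \<mu> \<nu>"
  let ?D1 = "distr \<mu> borel (\<lambda>x. (x, 0::'b))" and ?D2 = "distr \<nu> borel (\<lambda>y. (0::'a, y))"
  have s1: "sets ?D1 = sets ?\<rho>" and s2: "sets ?D2 = sets ?\<rho>" using rho_props(1) by auto
  have e: "\<And>A. A \<in> sets ?\<rho> \<Longrightarrow> emeasure ?\<rho> A = emeasure ?D1 A + emeasure ?D2 A"
    using rho_props(2)[of _ \<mu> \<nu>] rho_props(1)[of \<mu> \<nu>] by simp
  have p1: "(\<lambda>x. (x, 0::'b)) \<in> measurable \<mu> borel"
    unfolding measurable_cong_sets[OF s\<mu> refl] by (intro borel_measurable_continuous_onI continuous_intros)
  have p2: "(\<lambda>y. (0::'a, y)) \<in> measurable \<nu> borel"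
    unfolding measurable_cong_sets[OF s\<nu> refl] by (intro borel_measurable_continuous_onI continuous_intros)
  have fb: "f \<in> borel_measurable borel"
    using f measurable_cong_sets[OF rho_props(1) refl] unfolding L2_def by auto
  have f2: "integrable ?\<rho> (\<lambda>x. (cmod (f x))\<^sup>2)" using f unfolding L2_def by auto
  have I: "integrable ?\<rho> g \<longleftrightarrow> integrable ?D1 g \<and> integrable ?D2 g" for g :: "_ \<Rightarrow> 'c::{banach,second_countable_topology}"
    by (rule sum_meas_integrable[OF s1 s2]) (rule e)
  have J: "integrable ?\<rho> g \<Longrightarrow> integral\<^sup>L ?\<rho> g = integral\<^sup>L ?D1 g + integral\<^sup>L ?D2 g" for g :: "_ \<Rightarrow> 'c::{banach,second_countable_topology}"
    by (rule sum_meas_integral[OF s1 s2]) (rule e, assumption+)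
  have fb2: "(\<lambda>x. (cmod (f x))\<^sup>2) \<in> borel_measurable borel" using fb by measurable
  have g2: "integrable \<mu> (\<lambda>x. (cmod (f (x,0)))\<^sup>2)"
    using f2 I integrable_distr_eq[OF p1 fb2] by auto
  have h2: "integrable \<nu> (\<lambda>y. (cmod (f (0,y)))\<^sup>2)"
    using f2 I integrable_distr_eq[OF p2 fb2] by auto
  have gm: "(\<lambda>x. f (x,0)) \<in> borel_measurable \<mu>" using measurable_comp[OF p1 fb] by (simp add: o_def)
  have hm: "(\<lambda>y. f (0,y)) \<in> borel_measurable \<nu>" using measurable_comp[OF p2 fb] by (simp add: o_def)
  show "(\<lambda>x. f (x,0)) \<in> L2 \<mu>" "(\<lambda>y. f (0,y)) \<in> L2 \<nu>" using g2 h2 gm hm unfolding L2_def by auto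
  show "L2_norm_sq ?\<rho> f = L2_norm_sq \<mu> (\<lambda>x. f (x,0)) + L2_norm_sq \<nu> (\<lambda>y. f (0,y))"
    unfolding L2_norm_sq_def using J[OF f2] integral_distr[OF p1 fb2] integral_distr[OF p2 fb2] by simp
  let ?F = "\<lambda>p. f p * cnj (expo (l1,l2) p)"
  have eb[measurable]: "(\<lambda>x. cnj (expo (l1,l2) x)) \<in> borel_measurable borel"
    unfolding expo_def by (intro borel_measurable_continuous_onI continuous_intros)
  have Fb: "?F \<in> borel_measurable borel" using fb by measurable
  have "integrable \<mu> (\<lambda>x. 1 + (cmod (f (x,0)))\<^sup>2)"
    by (rule Bochner_Integration.integrable_add[OF finite_measure.integrable_const[OF fm] g2])
  then have i1: "integrable \<mu> (\<lambda>x. ?F (x,0))"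
  proof (rule Bochner_Integration.integrable_bound)
    show "(\<lambda>x. ?F (x,0)) \<in> borel_measurable \<mu>" using measurable_comp[OF p1 Fb] by (simp add: o_def)
    show "AE x in \<mu>. norm (?F (x,0)) \<le> norm (1 + (cmod (f (x,0)))\<^sup>2)"
      by (intro AE_I2) (simp add: norm_mult le_1_plus_sq)
  qed
  have "integrable \<nu> (\<lambda>x. 1 + (cmod (f (0,x)))\<^sup>2)"
    by (rule Bochner_Integration.integrable_add[OF finite_measure.integrable_const[OF fn] h2])
  then have i2: "integrable \<nu> (\<lambda>x. ?F (0,x))"
  proof (rule Bochner_Integration.integrable_bound)
    show "(\<lambda>x. ?F (0,x)) \<in> borel_measurable \<nu>" using measurable_comp[OF p2 Fb] by (simp add: o_def)
    show "AE x in \<nu>. norm (?F (0,x)) \<le> norm (1 + (cmod (f (0,x)))\<^sup>2)"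
      by (intro AE_I2) (simp add: norm_mult le_1_plus_sq)
  qed
  have iF: "integrable ?\<rho> ?F" using I integrable_distr_eq[OF p1 Fb] integrable_distr_eq[OF p2 Fb] i1 i2 by auto
  show "L2_inner ?\<rho> f (expo (l1,l2)) =
       L2_inner \<mu> (\<lambda>x. f (x,0)) (expo l1) + L2_inner \<nu> (\<lambda>y. f (0,y)) (expo l2)"
    unfolding L2_inner_def using J[OF iF] integral_distr[OF p1 Fb] integral_distr[OF p2 Fb]
    by (simp add: expo_Pair1 expo_Pair2)
qed



lemma finite_frame_null:
  fixes M :: "'a::euclidean_space measure"
  assumes cf: "cont_finite_borel M" and fr: "fourier_frame M \<Lambda>" and fin: "finite \<Lambda>"
  shows "emeasure M (space M) = 0"
proof -
  interpret finite_measure M using cf unfolding cont_finite_borel_def by auto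
  have sM: "sets M = sets borel" and pt: "\<And>x. emeasure M {x} = 0" using cf by (auto simp: cont_finite_borel_def)
  have spM: "space M = UNIV" using sets_eq_imp_space_eq[OF sM] by simp
  obtain A B where A: "0 < A" and fr': "\<And>f. f \<in> L2 M \<Longrightarrow> A * L2_norm_sq M f \<le> (\<Sum>\<^sub>\<infinity>l\<in>\<Lambda>. (cmod (L2_inner M f (expo l)))\<^sup>2)"
    using fr unfolding fourier_frame_def by blast
  define k where "k = real (card \<Lambda>)"
  define \<delta> where "\<delta> = A / (k + 1)"
  have kpos: "k \<ge> 0" unfolding k_def by simp
  have \<delta>pos: "\<delta> > 0" unfolding \<delta>_def k_def using A by auto
  have dich: "measure M E = 0 \<or> \<delta> \<le> measure M E" if E: "E \<in> sets M" for E
  proof -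
    let ?f = "\<lambda>x. (indicator E x :: complex)"
    have sq: "(\<lambda>x. (cmod (?f x))\<^sup>2) = indicator E" by (auto simp: fun_eq_iff indicator_def)
    have ii: "integrable M (indicator E :: _ \<Rightarrow> real)" using E by (simp add: emeasure_eq_measure)
    have fL: "?f \<in> L2 M" unfolding L2_def mem_Collect_eq using E ii sq
      by (metis borel_measurable_indicator)
    have n: "L2_norm_sq M ?f = measure M E" unfolding L2_norm_sq_def using E spM sq by simp
    have i: "cmod (L2_inner M ?f (expo l)) \<le> measure M E" for l
    proof -
      have "cmod (L2_inner M ?f (expo l)) \<le> (\<integral>x. norm (?f x * cnj (expo l x)) \<partial>M)"
        unfolding L2_inner_def by (rule integral_norm_bound)
      also have "(\<lambda>x. norm (?f x * cnj (expo l x))) = indicator E"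
        by (auto simp: fun_eq_iff indicator_def norm_mult expo_def)
      finally show ?thesis using spM by simp
    qed
    let ?m = "measure M E"
    have "A * ?m \<le> (\<Sum>l\<in>\<Lambda>. (cmod (L2_inner M ?f (expo l)))\<^sup>2)" using fr'[OF fL] n fin by simp
    also have "\<dots> \<le> (\<Sum>l\<in>\<Lambda>. ?m\<^sup>2)" by (intro sum_mono power_mono i) simp
    also have "\<dots> = k * ?m\<^sup>2" by (simp add: k_def)
    finally have *: "A * ?m \<le> k * ?m * ?m" by (simp add: power2_eq_square mult.assoc)
    show ?thesis
    proof (cases "?m = 0")
      case False
      then have mpos: "?m > 0" using measure_nonneg[of M E] by linarith
      then have "A \<le> k * ?m" using * mult_right_le_imp_le by blast
      also have "\<dots> \<le> (k + 1) * ?m" using mpos by (simp add: distrib_right)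
      finally show ?thesis unfolding \<delta>_def using kpos by (simp add: divide_le_eq mult.commute)
    qed simp
  qed
  have small: "\<exists>r>0. measure M (ball x r) < \<delta>" for x
  proof -
    have "(\<lambda>n. measure M (ball x (1/Suc n))) \<longlonglongrightarrow> measure M (\<Inter>n. ball x (1/Suc n))"
      by (rule finite_Lim_measure_decseq)
         (auto simp: decseq_def sM intro!: subset_ball divide_left_mono)
    moreover have "(\<Inter>n. ball x (1/Suc n)) = {x}"
    proof (intro equalityI subsetI)
      fix y assume y: "y \<in> (\<Inter>n. ball x (1/Suc n))"
      show "y \<in> {x}"
      proof (rule ccontr)
        assume "y \<notin> {x}"
        then have "dist x y > 0" by simp
        then obtain n where "inverse (real (Suc n)) < dist x y" using reals_Archimedean by blast
        with y show False by (metis (no_types, lifting) INT_E mem_ball not_less_iff_gr_or_eq order.strict_trans UNIV_I inverse_eq_divide)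
      qed
    qed auto
    moreover have "measure M {x} = 0" using pt by (simp add: measure_def)
    ultimately have "(\<lambda>n. measure M (ball x (1/Suc n))) \<longlonglongrightarrow> 0" by simp
    then have "eventually (\<lambda>n. measure M (ball x (1/Suc n)) < \<delta>) sequentially"
      using \<delta>pos by (rule order_tendstoD(2))
    then obtain n where "measure M (ball x (1/Suc n)) < \<delta>" by (auto simp: eventually_sequentially)
    then show ?thesis by (intro exI[of _ "1/Suc n"]) auto
  qed
  then obtain r where r: "\<And>x. r x > 0" "\<And>x. measure M (ball x (r x)) < \<delta>" by metis
  have zero: "ball x (r x) \<in> null_sets M" for x
  proof -
    have "measure M (ball x (r x)) = 0" using dich[of "ball x (r x)"] r(2)[of x] sM by auto
    then show ?thesis using sM by (auto simp: emeasure_eq_measure null_sets_def)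
  qed
  obtain F' where F': "F' \<subseteq> range (\<lambda>x. ball x (r x))" "countable F'" "\<Union>F' = \<Union>(range (\<lambda>x. ball x (r x)))"
    using Lindelof[of "range (\<lambda>x. ball x (r x))"] by auto
  have U: "\<Union>(range (\<lambda>x. ball x (r x))) = UNIV" using r(1) by auto
  have "(\<Union>S\<in>F'. id S) \<in> null_sets M"
    using F' zero by (intro null_sets_UN') auto
  then have "UNIV \<in> null_sets M" using F'(3) U by simp
  then show ?thesis using spM by auto
qed



lemma sq_add_le: "(cmod (x + y))\<^sup>2 \<le> 2 * (cmod x)\<^sup>2 + 2 * (cmod y)\<^sup>2"
proof -
  have "cmod (x + y) \<le> cmod x + cmod y" by (rule norm_triangle_ineq)
  then have "(cmod (x + y))\<^sup>2 \<le> (cmod x + cmod y)\<^sup>2" by (intro power_mono) auto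
  also have "\<dots> \<le> 2 * (cmod x)\<^sup>2 + 2 * (cmod y)\<^sup>2"
    using zero_le_power2[of "cmod x - cmod y"] by (simp add: power2_eq_square algebra_simps)
  finally show ?thesis .
qed

lemma sq_add_ge: "(cmod x)\<^sup>2 / 2 - (cmod y)\<^sup>2 \<le> (cmod (x + y))\<^sup>2"
  using sq_add_le[of "x + y" "-y"] by simp

lemma core_upper:
  fixes a :: "'a \<Rightarrow> complex" and b :: "'b \<Rightarrow> complex" and \<tau> :: "'a \<times> nat \<Rightarrow> 'b"
  assumes inj: "inj_on \<tau> (\<Lambda> \<times> {..<N})" and img: "\<tau> ` (\<Lambda> \<times> {..<N}) \<subseteq> T"
    and sa: "(\<lambda>l. (cmod (a l))\<^sup>2) summable_on \<Lambda>" and sb: "(\<lambda>t. (cmod (b t))\<^sup>2) summable_on T"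
    and G: "finite G" "G \<subseteq> \<Lambda> \<times> {..<N}"
  shows "(\<Sum>p\<in>G. (cmod (a (fst p) + b (\<tau> p)))\<^sup>2) \<le>
     2 * real N * (\<Sum>\<^sub>\<infinity>l\<in>\<Lambda>. (cmod (a l))\<^sup>2) + 2 * (\<Sum>\<^sub>\<infinity>t\<in>T. (cmod (b t))\<^sup>2)"
proof -
  have "(\<Sum>p\<in>G. (cmod (a (fst p) + b (\<tau> p)))\<^sup>2) \<le> (\<Sum>p\<in>G. 2 * (cmod (a (fst p)))\<^sup>2 + 2 * (cmod (b (\<tau> p)))\<^sup>2)"
    by (intro sum_mono sq_add_le)
  also have "\<dots> = 2 * (\<Sum>p\<in>G. (cmod (a (fst p)))\<^sup>2) + 2 * (\<Sum>p\<in>G. (cmod (b (\<tau> p)))\<^sup>2)"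
    by (simp add: sum.distrib sum_distrib_left)
  also have "(\<Sum>p\<in>G. (cmod (a (fst p)))\<^sup>2) \<le> real N * (\<Sum>\<^sub>\<infinity>l\<in>\<Lambda>. (cmod (a l))\<^sup>2)"
  proof -
    have fG: "finite (fst ` G)" using G by auto
    have "(\<Sum>p\<in>G. (cmod (a (fst p)))\<^sup>2) \<le> (\<Sum>p\<in>fst ` G \<times> {..<N}. (cmod (a (fst p)))\<^sup>2)"
      using G fG by (intro sum_mono2) force+
    also have "\<dots> = (\<Sum>l\<in>fst ` G. \<Sum>j<N. (cmod (a l))\<^sup>2)"
      by (subst sum.cartesian_product) (simp add: case_prod_beta)
    also have "\<dots> = real N * (\<Sum>l\<in>fst ` G. (cmod (a l))\<^sup>2)" by (simp add: sum_distrib_left)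
    also have "(\<Sum>l\<in>fst ` G. (cmod (a l))\<^sup>2) \<le> (\<Sum>\<^sub>\<infinity>l\<in>\<Lambda>. (cmod (a l))\<^sup>2)"
      using G fG by (intro finite_sum_le_infsum sa) auto
    finally show ?thesis by (simp add: mult_left_mono)
  qed
  also have "(\<Sum>p\<in>G. (cmod (b (\<tau> p)))\<^sup>2) \<le> (\<Sum>\<^sub>\<infinity>t\<in>T. (cmod (b t))\<^sup>2)"
  proof -
    have ij: "inj_on \<tau> G" using inj G(2) by (rule inj_on_subset)
    have "(\<Sum>p\<in>G. (cmod (b (\<tau> p)))\<^sup>2) = (\<Sum>t\<in>\<tau> ` G. (cmod (b t))\<^sup>2)"
      by (simp add: sum.reindex[OF ij])
    also have "\<dots> \<le> (\<Sum>\<^sub>\<infinity>t\<in>T. (cmod (b t))\<^sup>2)"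
      using G img by (intro finite_sum_le_infsum sb) auto
    finally show ?thesis .
  qed
  finally show ?thesis by (simp add: mult.assoc)
qed

lemma core_lower:
  fixes a :: "'a \<Rightarrow> complex" and b :: "'b \<Rightarrow> complex" and \<tau> :: "'a \<times> nat \<Rightarrow> 'b"
  assumes inj: "inj_on \<tau> (\<Lambda> \<times> {..<N})" and img: "\<tau> ` (\<Lambda> \<times> {..<N}) \<subseteq> T"
    and sb: "(\<lambda>t. (cmod (b t))\<^sup>2) summable_on T"
    and G: "finite G0" "G0 \<subseteq> \<Lambda>"
  shows "real N / 2 * (\<Sum>l\<in>G0. (cmod (a l))\<^sup>2) - (\<Sum>\<^sub>\<infinity>t\<in>T. (cmod (b t))\<^sup>2) \<le>
     (\<Sum>p\<in>G0 \<times> {..<N}. (cmod (a (fst p) + b (\<tau> p)))\<^sup>2)"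
proof -
  have sub: "G0 \<times> {..<N} \<subseteq> \<Lambda> \<times> {..<N}" using G by auto
  have fG: "finite (G0 \<times> {..<N})" using G by auto
  have "(\<Sum>p\<in>G0 \<times> {..<N}. (cmod (b (\<tau> p)))\<^sup>2) \<le> (\<Sum>\<^sub>\<infinity>t\<in>T. (cmod (b t))\<^sup>2)"
  proof -
    have ij: "inj_on \<tau> (G0 \<times> {..<N})" using inj sub by (rule inj_on_subset)
    have "(\<Sum>p\<in>G0 \<times> {..<N}. (cmod (b (\<tau> p)))\<^sup>2) = (\<Sum>t\<in>\<tau> ` (G0 \<times> {..<N}). (cmod (b t))\<^sup>2)"
      by (simp add: sum.reindex[OF ij])
    also have "\<dots> \<le> (\<Sum>\<^sub>\<infinity>t\<in>T. (cmod (b t))\<^sup>2)"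
      using fG img sub by (intro finite_sum_le_infsum sb) auto
    finally show ?thesis .
  qed
  moreover have "(\<Sum>p\<in>G0 \<times> {..<N}. (cmod (a (fst p)))\<^sup>2 / 2) = real N / 2 * (\<Sum>l\<in>G0. (cmod (a l))\<^sup>2)"
  proof -
    have "(\<Sum>p\<in>G0 \<times> {..<N}. (cmod (a (fst p)))\<^sup>2 / 2) = (\<Sum>l\<in>G0. \<Sum>j<N. (cmod (a l))\<^sup>2 / 2)"
      by (subst sum.cartesian_product) (simp add: case_prod_beta)
    then show ?thesis by (simp add: sum_distrib_left sum_divide_distrib)
  qed
  moreover have "(\<Sum>p\<in>G0 \<times> {..<N}. (cmod (a (fst p)))\<^sup>2 / 2 - (cmod (b (\<tau> p)))\<^sup>2) \<le>
     (\<Sum>p\<in>G0 \<times> {..<N}. (cmod (a (fst p) + b (\<tau> p)))\<^sup>2)"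
    by (intro sum_mono sq_add_ge)
  ultimately show ?thesis by (simp add: sum_subtractf)
qed



lemma abstract_bounds:
  fixes a :: "'a \<Rightarrow> complex" and b :: "'b \<Rightarrow> complex"
    and \<tau> :: "'a \<times> nat \<Rightarrow> 'b" and \<sigma> :: "'b \<times> nat \<Rightarrow> 'a"
  assumes inj\<tau>: "inj_on \<tau> (\<Lambda> \<times> {..<N})" and im\<tau>: "\<tau> ` (\<Lambda> \<times> {..<N}) \<subseteq> T"
    and inj\<sigma>: "inj_on \<sigma> (\<Gamma> \<times> {..<N})" and im\<sigma>: "\<sigma> ` (\<Gamma> \<times> {..<N}) \<subseteq> S"
    and sa\<Lambda>: "(\<lambda>l. (cmod (a l))\<^sup>2) summable_on \<Lambda>" and saS: "(\<lambda>l. (cmod (a l))\<^sup>2) summable_on S"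
    and sb\<Gamma>: "(\<lambda>l. (cmod (b l))\<^sup>2) summable_on \<Gamma>" and sbT: "(\<lambda>l. (cmod (b l))\<^sup>2) summable_on T"
    and a\<Lambda>up: "(\<Sum>\<^sub>\<infinity>l\<in>\<Lambda>. (cmod (a l))\<^sup>2) \<le> B1 * ng"
    and a\<Lambda>lo: "A1 * ng \<le> (\<Sum>\<^sub>\<infinity>l\<in>\<Lambda>. (cmod (a l))\<^sup>2)"
    and aS: "(\<Sum>\<^sub>\<infinity>l\<in>S. (cmod (a l))\<^sup>2) \<le> CS * ng"
    and b\<Gamma>up: "(\<Sum>\<^sub>\<infinity>l\<in>\<Gamma>. (cmod (b l))\<^sup>2) \<le> B2 * nh"
    and b\<Gamma>lo: "A2 * nh \<le> (\<Sum>\<^sub>\<infinity>l\<in>\<Gamma>. (cmod (b l))\<^sup>2)"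
    and bT: "(\<Sum>\<^sub>\<infinity>l\<in>T. (cmod (b l))\<^sup>2) \<le> CT * nh"
    and nn: "ng \<ge> 0" "nh \<ge> 0" "CS \<ge> 0" "CT \<ge> 0" "B1 \<ge> 0" "B2 \<ge> 0"
    and NA1: "real N * A1 / 2 \<ge> CS + CT + 1" and NA2: "real N * A2 / 2 \<ge> CS + CT + 1"
    and \<Theta>: "\<Theta> = (\<lambda>p. (fst p, \<tau> p)) ` (\<Lambda> \<times> {..<N}) \<union> (\<lambda>q. (\<sigma> q, fst q)) ` (\<Gamma> \<times> {..<N})"
  shows "(\<lambda>l. (cmod (a (fst l) + b (snd l)))\<^sup>2) summable_on \<Theta> \<and>
    (ng + nh) / 2 \<le> (\<Sum>\<^sub>\<infinity>l\<in>\<Theta>. (cmod (a (fst l) + b (snd l)))\<^sup>2) \<and>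
    (\<Sum>\<^sub>\<infinity>l\<in>\<Theta>. (cmod (a (fst l) + b (snd l)))\<^sup>2) \<le> (2 * real N * (B1 + B2) + 2 * CS + 2 * CT) * (ng + nh)"
proof -
  define \<Phi> where "\<Phi> = (\<lambda>l. (cmod (a (fst l) + b (snd l)))\<^sup>2)"
  define \<phi>1 where "\<phi>1 = (\<lambda>p. (fst p, \<tau> p))"
  define \<phi>2 where "\<phi>2 = (\<lambda>q. (\<sigma> q, fst q))"
  let ?I1 = "\<Lambda> \<times> {..<N}" and ?I2 = "\<Gamma> \<times> {..<N}"
  have \<Theta>': "\<Theta> = \<phi>1 ` ?I1 \<union> \<phi>2 ` ?I2" using \<Theta> unfolding \<phi>1_def \<phi>2_def by simp
  have Phi_nn: "\<And>l. \<Phi> l \<ge> 0" unfolding \<Phi>_def by simp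
  have inj1: "inj_on \<phi>1 ?I1" using inj\<tau> unfolding \<phi>1_def inj_on_def by auto
  have inj2: "inj_on \<phi>2 ?I2" using inj\<sigma> unfolding \<phi>2_def inj_on_def by auto
  have c1: "\<Phi> (\<phi>1 p) = (cmod (a (fst p) + b (\<tau> p)))\<^sup>2" for p unfolding \<Phi>_def \<phi>1_def by simp
  have c2: "\<Phi> (\<phi>2 q) = (cmod (b (fst q) + a (\<sigma> q)))\<^sup>2" for q unfolding \<Phi>_def \<phi>2_def by (simp add: add.commute)
  define Bt where "Bt = (2 * real N * (B1 + B2) + 2 * CS + 2 * CT) * (ng + nh)"
  have up: "sum \<Phi> F \<le> Bt" if F: "finite F" "F \<subseteq> \<Theta>" for F
  proof -
    define F1 where "F1 = \<phi>1 -` F \<inter> ?I1"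
    define F2 where "F2 = \<phi>2 -` F \<inter> ?I2"
    have fF1: "finite F1" unfolding F1_def using F(1) inj1 by (rule finite_vimage_IntI)
    have fF2: "finite F2" unfolding F2_def using F(1) inj2 by (rule finite_vimage_IntI)
    have "F \<subseteq> \<phi>1 ` F1 \<union> \<phi>2 ` F2" using F(2) unfolding \<Theta>' F1_def F2_def by auto
    then have "sum \<Phi> F \<le> sum \<Phi> (\<phi>1 ` F1 \<union> \<phi>2 ` F2)"
      using fF1 fF2 Phi_nn by (intro sum_mono2) auto
    also have "\<dots> \<le> sum \<Phi> (\<phi>1 ` F1) + sum \<Phi> (\<phi>2 ` F2)"
      using fF1 fF2 Phi_nn by (simp add: sum_Un sum_nonneg)
    also have "sum \<Phi> (\<phi>1 ` F1) = (\<Sum>p\<in>F1. (cmod (a (fst p) + b (\<tau> p)))\<^sup>2)"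
      using inj_on_subset[OF inj1, of F1] by (simp add: F1_def sum.reindex c1)
    also have "\<dots> \<le> 2 * real N * (\<Sum>\<^sub>\<infinity>l\<in>\<Lambda>. (cmod (a l))\<^sup>2) + 2 * (\<Sum>\<^sub>\<infinity>t\<in>T. (cmod (b t))\<^sup>2)"
      by (rule core_upper[OF inj\<tau> im\<tau> sa\<Lambda> sbT fF1]) (auto simp: F1_def)
    also have "sum \<Phi> (\<phi>2 ` F2) = (\<Sum>q\<in>F2. (cmod (b (fst q) + a (\<sigma> q)))\<^sup>2)"
      using inj_on_subset[OF inj2, of F2] by (simp add: F2_def sum.reindex c2)
    also have "\<dots> \<le> 2 * real N * (\<Sum>\<^sub>\<infinity>l\<in>\<Gamma>. (cmod (b l))\<^sup>2) + 2 * (\<Sum>\<^sub>\<infinity>t\<in>S. (cmod (a t))\<^sup>2)"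
      by (rule core_upper[OF inj\<sigma> im\<sigma> sb\<Gamma> saS fF2]) (auto simp: F2_def)
    finally have *: "sum \<Phi> F \<le> 2 * real N * (\<Sum>\<^sub>\<infinity>l\<in>\<Lambda>. (cmod (a l))\<^sup>2) + 2 * (\<Sum>\<^sub>\<infinity>t\<in>T. (cmod (b t))\<^sup>2)
       + (2 * real N * (\<Sum>\<^sub>\<infinity>l\<in>\<Gamma>. (cmod (b l))\<^sup>2) + 2 * (\<Sum>\<^sub>\<infinity>t\<in>S. (cmod (a t))\<^sup>2))" by simp
    have k1: "2 * real N * (\<Sum>\<^sub>\<infinity>l\<in>\<Lambda>. (cmod (a l))\<^sup>2) \<le> 2 * real N * (B1 * ng)"
      using a\<Lambda>up by (intro mult_left_mono) auto
    have k2: "2 * real N * (\<Sum>\<^sub>\<infinity>l\<in>\<Gamma>. (cmod (b l))\<^sup>2) \<le> 2 * real N * (B2 * nh)"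
      using b\<Gamma>up by (intro mult_left_mono) auto
    have e: "Bt = 2 * real N * (B1 * ng) + 2 * real N * (B2 * nh) + 2 * (CS * ng) + 2 * (CT * nh)
       + (2 * real N * (B1 * nh) + 2 * real N * (B2 * ng) + 2 * (CS * nh) + 2 * (CT * ng))"
      unfolding Bt_def by (simp add: algebra_simps)
    have p: "0 \<le> 2 * real N * (B1 * nh) + 2 * real N * (B2 * ng) + 2 * (CS * nh) + 2 * (CT * ng)"
      using nn by (intro add_nonneg_nonneg mult_nonneg_nonneg) auto
    show ?thesis using * k1 k2 aS bT e p by linarith
  qed
  have summ: "\<Phi> summable_on \<Theta>"
    by (rule nonneg_bdd_above_summable_on) (use Phi_nn up in \<open>auto intro!: bdd_aboveI[of _ Bt]\<close>)
  have upper: "infsum \<Phi> \<Theta> \<le> Bt" by (rule infsum_le_finite_sums[OF summ up])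
  define X where "X = infsum \<Phi> \<Theta>"
  have Npos: "real N > 0"
  proof (rule ccontr)
    assume "\<not> real N > 0" then have "real N = 0" by simp
    with NA1 nn show False by simp
  qed
  have low1: "real N * A1 / 2 * ng \<le> X + CT * nh"
  proof -
    have "(\<Sum>\<^sub>\<infinity>l\<in>\<Lambda>. (cmod (a l))\<^sup>2) \<le> 2 * (X + CT * nh) / real N"
    proof (rule infsum_le_finite_sums[OF sa\<Lambda>])
      fix G0 assume G0: "finite G0" "G0 \<subseteq> \<Lambda>"
      have "real N / 2 * (\<Sum>l\<in>G0. (cmod (a l))\<^sup>2) - (\<Sum>\<^sub>\<infinity>t\<in>T. (cmod (b t))\<^sup>2) \<le>
          (\<Sum>p\<in>G0 \<times> {..<N}. (cmod (a (fst p) + b (\<tau> p)))\<^sup>2)"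
        by (rule core_lower[OF inj\<tau> im\<tau> sbT G0])
      also have "\<dots> = sum \<Phi> (\<phi>1 ` (G0 \<times> {..<N}))"
      proof -
        have ij: "inj_on \<phi>1 (G0 \<times> {..<N})" by (rule inj_on_subset[OF inj1]) (use G0 in auto)
        show ?thesis by (simp add: sum.reindex[OF ij] c1)
      qed
      also have "\<dots> \<le> X" unfolding X_def
        using G0 Phi_nn by (intro finite_sum_le_infsum summ) (auto simp: \<Theta>')
      finally have "real N / 2 * (\<Sum>l\<in>G0. (cmod (a l))\<^sup>2) \<le> X + CT * nh" using bT by linarith
      then show "(\<Sum>l\<in>G0. (cmod (a l))\<^sup>2) \<le> 2 * (X + CT * nh) / real N"
        using Npos by (simp add: field_simps)
    qed
    with a\<Lambda>lo have "A1 * ng \<le> 2 * (X + CT * nh) / real N" by linarith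
    then show ?thesis using Npos by (simp add: field_simps)
  qed
  have low2: "real N * A2 / 2 * nh \<le> X + CS * ng"
  proof -
    have "(\<Sum>\<^sub>\<infinity>l\<in>\<Gamma>. (cmod (b l))\<^sup>2) \<le> 2 * (X + CS * ng) / real N"
    proof (rule infsum_le_finite_sums[OF sb\<Gamma>])
      fix G0 assume G0: "finite G0" "G0 \<subseteq> \<Gamma>"
      have "real N / 2 * (\<Sum>l\<in>G0. (cmod (b l))\<^sup>2) - (\<Sum>\<^sub>\<infinity>t\<in>S. (cmod (a t))\<^sup>2) \<le>
          (\<Sum>p\<in>G0 \<times> {..<N}. (cmod (b (fst p) + a (\<sigma> p)))\<^sup>2)"
        by (rule core_lower[OF inj\<sigma> im\<sigma> saS G0])
      also have "\<dots> = sum \<Phi> (\<phi>2 ` (G0 \<times> {..<N}))"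
      proof -
        have ij: "inj_on \<phi>2 (G0 \<times> {..<N})" by (rule inj_on_subset[OF inj2]) (use G0 in auto)
        show ?thesis by (simp add: sum.reindex[OF ij] c2)
      qed
      also have "\<dots> \<le> X" unfolding X_def
        using G0 Phi_nn by (intro finite_sum_le_infsum summ) (auto simp: \<Theta>')
      finally have "real N / 2 * (\<Sum>l\<in>G0. (cmod (b l))\<^sup>2) \<le> X + CS * ng" using aS by linarith
      then show "(\<Sum>l\<in>G0. (cmod (b l))\<^sup>2) \<le> 2 * (X + CS * ng) / real N"
        using Npos by (simp add: field_simps)
    qed
    with b\<Gamma>lo have "A2 * nh \<le> 2 * (X + CS * ng) / real N" by linarith
    then show ?thesis using Npos by (simp add: field_simps)
  qed
  have m1: "(CS + CT + 1) * ng \<le> real N * A1 / 2 * ng" using NA1 nn by (intro mult_right_mono) auto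
  have m2: "(CS + CT + 1) * nh \<le> real N * A2 / 2 * nh" using NA2 nn by (intro mult_right_mono) auto
  have e1: "(CS + CT + 1) * ng = CS * ng + CT * ng + ng" "(CS + CT + 1) * nh = CS * nh + CT * nh + nh"
    by (simp_all add: algebra_simps)
  have p1: "CT * ng \<ge> 0" "CS * nh \<ge> 0" using nn by auto
  have lower: "(ng + nh) / 2 \<le> X"
  proof -
    define P1 where "P1 = real N * A1 / 2 * ng"
    define P2 where "P2 = real N * A2 / 2 * nh"
    define Q1 where "Q1 = (CS + CT + 1) * ng"
    define Q2 where "Q2 = (CS + CT + 1) * nh"
    define u1 where "u1 = CS * ng" define u2 where "u2 = CT * ng"
    define v1 where "v1 = CS * nh" define v2 where "v2 = CT * nh"
    have "P1 \<le> X + v2" "P2 \<le> X + u1" "Q1 \<le> P1" "Q2 \<le> P2" "Q1 = u1 + u2 + ng" "Q2 = v1 + v2 + nh"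
      "0 \<le> u2" "0 \<le> v1"
      using low1 low2 m1 m2 e1 p1 unfolding P1_def P2_def Q1_def Q2_def u1_def u2_def v1_def v2_def by auto
    then have "ng + nh \<le> 2 * X" by linarith
    then show ?thesis by simp
  qed
  show ?thesis using summ upper lower unfolding \<Phi>_def X_def Bt_def by simp
qed



lemma null_integral: "emeasure M (space M) = 0 \<Longrightarrow> integral\<^sup>L M f = 0"
  by (rule integral_eq_zero_AE, rule AE_I[where N="space M"]) auto

lemma exists_bessel:
  fixes M :: "'a::euclidean_space measure"
  assumes cf: "cont_finite_borel M" and fr: "fourier_frame M \<Lambda>"
  shows "\<exists>T C. countable T \<and> infinite T \<and> C \<ge> 0 \<and> (\<forall>f\<in>L2 M.
     (\<lambda>l. (cmod (L2_inner M f (expo l)))\<^sup>2) summable_on T \<and>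
     (\<Sum>\<^sub>\<infinity>l\<in>T. (cmod (L2_inner M f (expo l)))\<^sup>2) \<le> C * L2_norm_sq M f)"
proof (cases "finite \<Lambda>")
  case False
  obtain A B where "0 < B" "\<forall>f \<in> L2 M.
           (\<lambda>l. (cmod (L2_inner M f (expo l)))\<^sup>2) summable_on \<Lambda> \<and>
           (\<Sum>\<^sub>\<infinity>l\<in>\<Lambda>. (cmod (L2_inner M f (expo l)))\<^sup>2) \<le> B * L2_norm_sq M f"
    using fr unfolding fourier_frame_def by blast
  moreover have "countable \<Lambda>" using fr unfolding fourier_frame_def by blast
  ultimately show ?thesis using False by (intro exI[of _ \<Lambda>] exI[of _ B]) auto
next
  case True
  have z: "emeasure M (space M) = 0" by (rule finite_frame_null[OF cf fr True])
  define v :: 'a where "v = (SOME i. i \<in> Basis)"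
  have v0: "v \<noteq> 0" unfolding v_def using SOME_Basis nonzero_Basis by blast
  define T where "T = range (\<lambda>n::nat. real n *\<^sub>R v)"
  have "inj (\<lambda>n::nat. real n *\<^sub>R v)" using v0 by (auto simp: inj_on_def)
  then have "infinite T" unfolding T_def by (rule range_inj_infinite)
  moreover have "countable T" unfolding T_def by simp
  moreover have "\<And>f l. L2_inner M f l = 0" unfolding L2_inner_def using z by (rule null_integral)
  moreover have "\<And>f. L2_norm_sq M f = 0" unfolding L2_norm_sq_def using z by (rule null_integral)
  ultimately show ?thesis by (intro exI[of _ T] exI[of _ 0]) auto
qed



lemma inj_into_infinite:
  fixes I :: "'i set" and T :: "'b set"
  assumes "countable I" "countable T" "infinite T"
  shows "\<exists>\<tau>. inj_on \<tau> I \<and> \<tau> ` I \<subseteq> T"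
proof -
  have b: "bij_betw (from_nat_into T) UNIV T" by (rule bij_betw_from_nat_into) (use assms in auto)
  have i1: "inj_on (to_nat_on I) I" using assms(1) by (rule inj_on_to_nat_on)
  have "inj_on (from_nat_into T \<circ> to_nat_on I) I"
    by (rule comp_inj_on[OF i1]) (use b bij_betw_imp_inj_on inj_on_subset in blast)
  moreover have "(from_nat_into T \<circ> to_nat_on I) ` I \<subseteq> T"
    using from_nat_into[of T] assms(3) by auto
  ultimately show ?thesis by blast
qed

lemma L2_norm_sq_nonneg: "L2_norm_sq M f \<ge> 0"
  unfolding L2_norm_sq_def by (intro integral_nonneg_AE) simp

theorem theorem2p1:
  fixes \<mu> :: "'a::euclidean_space measure" and \<nu> :: "'b::euclidean_space measure"
  assumes "cont_finite_borel \<mu>" and "cont_finite_borel \<nu>"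
    and "admits_fourier_frame \<mu>" and "admits_fourier_frame \<nu>"
  shows "admits_fourier_frame (rho_measure \<mu> \<nu>)"
proof -
  note cf1 = assms(1) and cf2 = assms(2)
  have s\<mu>: "sets \<mu> = sets borel" and fm: "finite_measure \<mu>" using cf1 by (auto simp: cont_finite_borel_def)
  have s\<nu>: "sets \<nu> = sets borel" and fn: "finite_measure \<nu>" using cf2 by (auto simp: cont_finite_borel_def)
  obtain \<Lambda> where fr1: "fourier_frame \<mu> \<Lambda>" using assms(3) unfolding admits_fourier_frame_def by blast
  obtain \<Gamma> where fr2: "fourier_frame \<nu> \<Gamma>" using assms(4) unfolding admits_fourier_frame_def by blast
  obtain A1 B1 where c\<Lambda>: "countable \<Lambda>" and AB1: "0 < A1" "0 < B1" and F1: "\<forall>f \<in> L2 \<mu>.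
           (\<lambda>l. (cmod (L2_inner \<mu> f (expo l)))\<^sup>2) summable_on \<Lambda> \<and>
           A1 * L2_norm_sq \<mu> f \<le> (\<Sum>\<^sub>\<infinity>l\<in>\<Lambda>. (cmod (L2_inner \<mu> f (expo l)))\<^sup>2) \<and>
           (\<Sum>\<^sub>\<infinity>l\<in>\<Lambda>. (cmod (L2_inner \<mu> f (expo l)))\<^sup>2) \<le> B1 * L2_norm_sq \<mu> f"
    using fr1 unfolding fourier_frame_def by blast
  obtain A2 B2 where c\<Gamma>: "countable \<Gamma>" and AB2: "0 < A2" "0 < B2" and F2: "\<forall>f \<in> L2 \<nu>.
           (\<lambda>l. (cmod (L2_inner \<nu> f (expo l)))\<^sup>2) summable_on \<Gamma> \<and>
           A2 * L2_norm_sq \<nu> f \<le> (\<Sum>\<^sub>\<infinity>l\<in>\<Gamma>. (cmod (L2_inner \<nu> f (expo l)))\<^sup>2) \<and>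
           (\<Sum>\<^sub>\<infinity>l\<in>\<Gamma>. (cmod (L2_inner \<nu> f (expo l)))\<^sup>2) \<le> B2 * L2_norm_sq \<nu> f"
    using fr2 unfolding fourier_frame_def by blast
  obtain S CS where S: "countable S" "infinite S" "CS \<ge> 0" and FS: "\<forall>f\<in>L2 \<mu>.
     (\<lambda>l. (cmod (L2_inner \<mu> f (expo l)))\<^sup>2) summable_on S \<and>
     (\<Sum>\<^sub>\<infinity>l\<in>S. (cmod (L2_inner \<mu> f (expo l)))\<^sup>2) \<le> CS * L2_norm_sq \<mu> f"
    using exists_bessel[OF cf1 fr1] by blast
  obtain T CT where T: "countable T" "infinite T" "CT \<ge> 0" and FT: "\<forall>f\<in>L2 \<nu>.
     (\<lambda>l. (cmod (L2_inner \<nu> f (expo l)))\<^sup>2) summable_on T \<and>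
     (\<Sum>\<^sub>\<infinity>l\<in>T. (cmod (L2_inner \<nu> f (expo l)))\<^sup>2) \<le> CT * L2_norm_sq \<nu> f"
    using exists_bessel[OF cf2 fr2] by blast
  define c where "c = CS + CT + 1"
  have cpos: "c > 0" unfolding c_def using S T by simp
  obtain N :: nat where N: "max (2 * c / A1) (2 * c / A2) < real N" using reals_Archimedean2 by blast
  have NA1: "real N * A1 / 2 \<ge> CS + CT + 1"
  proof -
    have "2 * c / A1 < real N" using N by simp
    then have "2 * c < real N * A1" using AB1 by (simp add: divide_less_eq)
    then show ?thesis unfolding c_def by simp
  qed
  have NA2: "real N * A2 / 2 \<ge> CS + CT + 1"
  proof -
    have "2 * c / A2 < real N" using N by simp
    then have "2 * c < real N * A2" using AB2 by (simp add: divide_less_eq)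
    then show ?thesis unfolding c_def by simp
  qed
  have Npos: "real N > 0" using N cpos AB1 by (smt (verit) divide_pos_pos)
  obtain \<tau> :: "'a \<times> nat \<Rightarrow> 'b" where \<tau>: "inj_on \<tau> (\<Lambda> \<times> {..<N})" "\<tau> ` (\<Lambda> \<times> {..<N}) \<subseteq> T"
    using inj_into_infinite[of "\<Lambda> \<times> {..<N}" T] c\<Lambda> T by auto
  obtain \<sigma> :: "'b \<times> nat \<Rightarrow> 'a" where \<sigma>: "inj_on \<sigma> (\<Gamma> \<times> {..<N})" "\<sigma> ` (\<Gamma> \<times> {..<N}) \<subseteq> S"
    using inj_into_infinite[of "\<Gamma> \<times> {..<N}" S] c\<Gamma> S by auto
  define \<Theta> where "\<Theta> = (\<lambda>p. (fst p, \<tau> p)) ` (\<Lambda> \<times> {..<N}) \<union> (\<lambda>q. (\<sigma> q, fst q)) ` (\<Gamma> \<times> {..<N})"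
  define Bt where "Bt = 2 * real N * (B1 + B2) + 2 * CS + 2 * CT"
  have Btpos: "Bt > 0" unfolding Bt_def using Npos AB1 AB2 S T by (simp add: add_pos_nonneg)
  have c\<Theta>: "countable \<Theta>" unfolding \<Theta>_def using c\<Lambda> c\<Gamma> by auto
  have key: "(\<lambda>l. (cmod (L2_inner (rho_measure \<mu> \<nu>) f (expo l)))\<^sup>2) summable_on \<Theta> \<and>
    1/2 * L2_norm_sq (rho_measure \<mu> \<nu>) f \<le> (\<Sum>\<^sub>\<infinity>l\<in>\<Theta>. (cmod (L2_inner (rho_measure \<mu> \<nu>) f (expo l)))\<^sup>2) \<and>
    (\<Sum>\<^sub>\<infinity>l\<in>\<Theta>. (cmod (L2_inner (rho_measure \<mu> \<nu>) f (expo l)))\<^sup>2) \<le> Bt * L2_norm_sq (rho_measure \<mu> \<nu>) f"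
    if f: "f \<in> L2 (rho_measure \<mu> \<nu>)" for f
  proof -
    define g where "g = (\<lambda>x. f (x, 0::'b))"
    define h where "h = (\<lambda>y. f (0::'a, y))"
    note D = decouple[OF s\<mu> s\<nu> fm fn f, folded g_def h_def]
    define a where "a = (\<lambda>l. L2_inner \<mu> g (expo l))"
    define b where "b = (\<lambda>l. L2_inner \<nu> h (expo l))"
    have eqf: "(\<lambda>l. (cmod (L2_inner (rho_measure \<mu> \<nu>) f (expo l)))\<^sup>2) = (\<lambda>l. (cmod (a (fst l) + b (snd l)))\<^sup>2)"
    proof
      fix l :: "'a \<times> 'b"
      obtain l1 l2 where l: "l = (l1, l2)" by (cases l)
      show "(cmod (L2_inner (rho_measure \<mu> \<nu>) f (expo l)))\<^sup>2 = (cmod (a (fst l) + b (snd l)))\<^sup>2"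
        unfolding l a_def b_def using D(4) by simp
    qed
    have nrm: "L2_norm_sq (rho_measure \<mu> \<nu>) f = L2_norm_sq \<mu> g + L2_norm_sq \<nu> h" using D(3) .
    have R: "(\<lambda>l. (cmod (a (fst l) + b (snd l)))\<^sup>2) summable_on \<Theta> \<and>
      (L2_norm_sq \<mu> g + L2_norm_sq \<nu> h) / 2 \<le> (\<Sum>\<^sub>\<infinity>l\<in>\<Theta>. (cmod (a (fst l) + b (snd l)))\<^sup>2) \<and>
      (\<Sum>\<^sub>\<infinity>l\<in>\<Theta>. (cmod (a (fst l) + b (snd l)))\<^sup>2) \<le> (2 * real N * (B1 + B2) + 2 * CS + 2 * CT) * (L2_norm_sq \<mu> g + L2_norm_sq \<nu> h)"
    proof (rule abstract_bounds[where ?A1.0=A1 and ?A2.0=A2, OF \<tau> \<sigma>])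
      show "\<Theta> = (\<lambda>p. (fst p, \<tau> p)) ` (\<Lambda> \<times> {..<N}) \<union> (\<lambda>q. (\<sigma> q, fst q)) ` (\<Gamma> \<times> {..<N})"
        by (rule \<Theta>_def)
    qed (use F1 F2 FS FT D(1,2) AB1 AB2 S T NA1 NA2 L2_norm_sq_nonneg in \<open>auto simp: a_def b_def\<close>)
    show ?thesis using R eqf nrm unfolding Bt_def by simp
  qed
  have "fourier_frame (rho_measure \<mu> \<nu>) \<Theta>"
    unfolding fourier_frame_def
    apply (rule conjI[OF c\<Theta>])
    apply (rule exI[of _ "1/2"], rule exI[of _ Bt])
    using Btpos key by auto
  then show ?thesis unfolding admits_fourier_frame_def by blast
qed

end
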